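(* Let $R$ be a super-commutative $\mathbb C$-algebra. Any finitely generated subalgebra $A\subset R((t))^{\sqrt{}}$ is contained in $R((t))^{\sqrt{}}_\epsilon$ for some $\epsilon\in\mathbf E$.
   Context: $R((t))^{\sqrt{}}\subset R((t))$ is the subring of Laurent series $\sum_{n\gg-\infty}a_nt^n$ with $a_n$ nilpotent for $n<0$. $\mathbf E$ is the set of sequences $\epsilon=(\epsilon_{-1},\epsilon_{-2},\dots)$ of nonnegative integers with $\epsilon_j=0$ for $j\ll0$. For $\epsilon\in\mathbf E$, $R((t))^{\sqrt{}}_\epsilon=\{\sum_{n\in\mathbb Z}a_nt^n : a_n^{1+\epsilon_n}=0 \text{ for all } n<0\}$. *)

theory Defs
  imports Main "HOL-Computational_Algebra.Formal_Laurent_Series"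
begin

definition supercomm_C_algebra ::
  "(complex \<Rightarrow> 'a::ring_1 \<Rightarrow> 'a) \<Rightarrow> 'a set \<Rightarrow> 'a set \<Rightarrow> bool" where
  "supercomm_C_algebra sc R0 R1 \<longleftrightarrow>
     module sc \<and>
     (\<forall>c x y. sc c (x * y) = sc c x * y \<and> sc c (x * y) = x * sc c y) \<and>
     module.subspace sc R0 \<and> module.subspace sc R1 \<and>
     R0 \<inter> R1 = {0} \<and> (\<forall>x. \<exists>a\<in>R0. \<exists>b\<in>R1. x = a + b) \<and>
     (\<forall>a\<in>R0. \<forall>b\<in>R0. a * b \<in> R0) \<and>
     (\<forall>a\<in>R0. \<forall>b\<in>R1. a * b \<in> R1 \<and> b * a \<in> R1) \<and>
     (\<forall>a\<in>R1. \<forall>b\<in>R1. a * b \<in> R0) \<and>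
     (\<forall>a\<in>R0. \<forall>b\<in>R0 \<union> R1. a * b = b * a) \<and>
     (\<forall>a\<in>R1. \<forall>b\<in>R1. a * b = - (b * a))"

definition nilpotent_elt :: "'a::{monoid_mult,zero} \<Rightarrow> bool" where
  "nilpotent_elt x \<longleftrightarrow> (\<exists>k::nat. x ^ k = 0)"

text \<open>R((t))^sqrt: Laurent series (finitely many negative-degree terms, built into
the type 'a fls) whose negative-degree coefficients are nilpotent.\<close>
definition sqrt_laurent :: "'a::ring_1 fls set" where
  "sqrt_laurent = {f. \<forall>n<0. nilpotent_elt (fls_nth f n)}"

text \<open>The index set E: sequences (eps_(-1), eps_(-2), ...) of naturals, vanishing for
indices j << 0. Encoded as functions int \<Rightarrow> nat supported on negative integers.\<close>
definition E_seqs :: "(int \<Rightarrow> nat) set" where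
  "E_seqs = {e. (\<forall>j\<ge>0. e j = 0) \<and> (\<exists>N. \<forall>j<N. e j = 0)}"

definition laurent_eps :: "(int \<Rightarrow> nat) \<Rightarrow> 'a::ring_1 fls set" where
  "laurent_eps e = {f. \<forall>n<0. (fls_nth f n) ^ (1 + e n) = 0}"

text \<open>\<complex>-scalar multiplication on R((t)), coefficientwise: c\<cdot>f = (c\<cdot>1) f,
where c\<cdot>1 is central in R.\<close>
definition fls_scaleC :: "(complex \<Rightarrow> 'a::ring_1 \<Rightarrow> 'a) \<Rightarrow> complex \<Rightarrow> 'a fls \<Rightarrow> 'a fls" where
  "fls_scaleC sc c f = fls_const (sc c 1) * f"

inductive_set gen_subalg ::
  "(complex \<Rightarrow> 'a::ring_1 \<Rightarrow> 'a) \<Rightarrow> 'a fls set \<Rightarrow> 'a fls set"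
  for sc :: "complex \<Rightarrow> 'a \<Rightarrow> 'a" and S :: "'a fls set" where
  gen: "f \<in> S \<Longrightarrow> f \<in> gen_subalg sc S"
| one: "1 \<in> gen_subalg sc S"
| add: "f \<in> gen_subalg sc S \<Longrightarrow> g \<in> gen_subalg sc S \<Longrightarrow> f + g \<in> gen_subalg sc S"
| mult: "f \<in> gen_subalg sc S \<Longrightarrow> g \<in> gen_subalg sc S \<Longrightarrow> f * g \<in> gen_subalg sc S"
| scale: "f \<in> gen_subalg sc S \<Longrightarrow> fls_scaleC sc c f \<in> gen_subalg sc S"

end

theory Submission imports Defs begin

definition skc :: "'a::ring_1 \<Rightarrow> bool" where
  "skc h \<longleftrightarrow> (\<forall>x. \<exists>x'. x * h = h * x')"

fun TL :: "'a::ring_1 list \<Rightarrow> 'a set" where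
  "TL [] = UNIV"
| "TL (h # hs) = {t * h * a | t a. t \<in> TL hs}"

lemma TL_rmult: "t \<in> TL hs \<Longrightarrow> t * r \<in> TL hs"
proof (induction hs arbitrary: t)
  case (Cons h hs)
  then obtain t' a where "t = t' * h * a" "t' \<in> TL hs" by auto
  moreover have "t * r = t' * h * (a * r)" using \<open>t = t' * h * a\<close> by (simp add: mult.assoc)
  ultimately show ?case by auto
qed simp

lemma TL_lmult: "t \<in> TL hs \<Longrightarrow> r * t \<in> TL hs"
proof (induction hs arbitrary: t)
  case (Cons h hs)
  then obtain t' a where "t = t' * h * a" "t' \<in> TL hs" by auto
  moreover have "r * t = (r * t') * h * a" using \<open>t = t' * h * a\<close> by (simp add: mult.assoc)
  ultimately show ?case using Cons.IH by auto
qed simp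

lemma TL_mult: "s \<in> TL hs \<Longrightarrow> t \<in> TL gs \<Longrightarrow> s * t \<in> TL (gs @ hs)"
proof (induction gs arbitrary: t)
  case Nil then show ?case by (simp add: TL_rmult)
next
  case (Cons g gs)
  then obtain t' a where "t = t' * g * a" "t' \<in> TL gs" by auto
  moreover have "s * t = (s * t') * g * a" using \<open>t = t' * g * a\<close> by (simp add: mult.assoc)
  ultimately show ?case using Cons.IH[of t'] Cons.prems by auto
qed

lemma TL_pow: "skc h \<Longrightarrow> t \<in> TL hs \<Longrightarrow> \<exists>c b. t = c * h ^ count_list hs h * b"
proof (induction hs arbitrary: t)
  case Nil have "t = t * h ^ count_list [] h * 1" by simp
  then show ?case by blast
next
  case (Cons g hs)
  then obtain t' a where ta: "t = t' * g * a" "t' \<in> TL hs" by auto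
  then obtain c b where cb: "t' = c * h ^ count_list hs h * b" using Cons by blast
  show ?case
  proof (cases "g = h")
    case True
    obtain b' where "b * h = h * b'" using Cons.prems(1) unfolding skc_def by blast
    then have "t = c * h ^ count_list hs h * (b * h) * a"
      using ta cb True by (simp add: mult.assoc)
    also have "\<dots> = c * (h ^ count_list hs h * h) * (b' * a)"
      using \<open>b * h = h * b'\<close> by (simp add: mult.assoc)
    also have "\<dots> = c * h ^ count_list (g # hs) h * (b' * a)"
      using True by (simp add: power_commutes)
    finally have "t = c * h ^ count_list (g # hs) h * (b' * a)" .
    then show ?thesis by blast
  next
    case False
    then have "t = c * h ^ count_list (g # hs) h * (b * g * a)"
      using ta cb by (simp add: mult.assoc)
    then show ?thesis by blast
  qed
qed

lemma TL_zero: "skc h \<Longrightarrow> h ^ M = 0 \<Longrightarrow> M \<le> count_list hs h \<Longrightarrow> t \<in> TL hs \<Longrightarrow> t = 0"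
proof -
  assume a: "skc h" "h ^ M = 0" "M \<le> count_list hs h" "t \<in> TL hs"
  then obtain c b where "t = c * h ^ count_list hs h * b" using TL_pow by blast
  moreover have "h ^ count_list hs h = 0"
    using a by (metis le_add_diff_inverse power_add mult_zero_left)
  ultimately show ?thesis by simp
qed

inductive_set QS :: "'a::ring_1 set \<Rightarrow> nat \<Rightarrow> int \<Rightarrow> 'a set" for H d w where
  zero: "0 \<in> QS H d w"
| base: "set hs \<subseteq> H \<Longrightarrow> t \<in> TL hs \<Longrightarrow> w \<le> int d * int (length hs) \<Longrightarrow> t \<in> QS H d w"
| add: "x \<in> QS H d w \<Longrightarrow> y \<in> QS H d w \<Longrightarrow> x + y \<in> QS H d w"

lemma QS_lmult: "x \<in> QS H d w \<Longrightarrow> r * x \<in> QS H d w"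
  by (induction rule: QS.induct) (auto simp: distrib_left intro: QS.intros TL_lmult)

lemma QS_rmult: "x \<in> QS H d w \<Longrightarrow> x * r \<in> QS H d w"
  by (induction rule: QS.induct) (auto simp: distrib_right intro: QS.intros TL_rmult)

lemma QS_mono: "x \<in> QS H d w \<Longrightarrow> w' \<le> w \<Longrightarrow> x \<in> QS H d w'"
  by (induction rule: QS.induct) (auto intro: QS.intros)

lemma QS_mult: "x \<in> QS H d a \<Longrightarrow> y \<in> QS H d b \<Longrightarrow> x * y \<in> QS H d (a + b)"
proof (induction rule: QS.induct)
  case zero then show ?case by (simp add: QS.zero)
next
  case (add x y') then show ?case by (simp add: distrib_right QS.add)
next
  case (base hs t)
  note ob = base.hyps
  from base.prems show ?case
  proof (induction rule: QS.induct)
    case zero then show ?case by (simp add: QS.zero)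
  next
    case (add u v) then show ?case by (simp add: distrib_left QS.add)
  next
    case (base gs s)
    have "t * s \<in> TL (gs @ hs)" using TL_mult[of t hs s gs] base ob by auto
    moreover have "a + b \<le> int d * int (length (gs @ hs))"
      using base ob by (simp add: algebra_simps)
    ultimately show ?case using base ob by (intro QS.base[of "gs@hs"]) auto
  qed
qed

lemma QS_sum: "finite A \<Longrightarrow> (\<And>i. i \<in> A \<Longrightarrow> f i \<in> QS H d w) \<Longrightarrow> sum f A \<in> QS H d w"
  by (induction A rule: finite_induct) (auto intro: QS.intros)

lemma QS_one: "1 \<in> QS H d 0"
  by (rule QS.base[of "[]"]) auto

lemma QS_pow: "x \<in> QS H d 1 \<Longrightarrow> x ^ n \<in> QS H d (int n)"
proof (induction n)
  case 0 then show ?case using QS_one by simp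
next
  case (Suc n) then show ?case using QS_mult[of x H d 1 "x^n" "int n"] by simp
qed

lemma QS_vanish:
  assumes "d > 0" and "\<And>hs t. set hs \<subseteq> H \<Longrightarrow> K \<le> length hs \<Longrightarrow> t \<in> TL hs \<Longrightarrow> t = 0"
  shows "x \<in> QS H d w \<Longrightarrow> int (d * K) \<le> w \<Longrightarrow> x = 0"
proof (induction rule: QS.induct)
  case (base hs t)
  then have "int d * int K \<le> int d * int (length hs)" by simp
  then have "K \<le> length hs" using assms(1) by (simp add: mult_le_cancel_left)
  then show ?case using assms(2) base by blast
qed auto

lemma pigeon:
  assumes "finite H" "set hs \<subseteq> H" "card H * M < length hs"
  shows "\<exists>h\<in>H. M \<le> count_list hs h"
proof (rule ccontr)
  assume na: "\<not> ?thesis"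
  have "length hs = sum (count_list hs) H" by (rule sum_count_set[OF assms(2,1), symmetric])
  also have "\<dots> \<le> sum (\<lambda>_. M) H"
    using na by (intro sum_mono) (auto simp: not_le less_imp_le)
  also have "\<dots> = card H * M" by simp
  finally have "length hs \<le> card H * M" .
  then show False using assms(3) leD by blast
qed


lemma sc_module: "supercomm_C_algebra sc R0 R1 \<Longrightarrow> module sc"
  unfolding supercomm_C_algebra_def by (elim conjE) assumption

lemma scF_dec: assumes "supercomm_C_algebra sc R0 R1" shows "\<forall>x. \<exists>a\<in>R0. \<exists>b\<in>R1. x = a + b"
  using assms unfolding supercomm_C_algebra_def by (elim conjE) assumption

lemma scF_00: assumes "supercomm_C_algebra sc R0 R1" shows "\<forall>a\<in>R0. \<forall>b\<in>R0. a * b \<in> R0"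
  using assms unfolding supercomm_C_algebra_def by (elim conjE) assumption

lemma scF_01: assumes "supercomm_C_algebra sc R0 R1" shows "\<forall>a\<in>R0. \<forall>b\<in>R1. a * b \<in> R1 \<and> b * a \<in> R1"
  using assms unfolding supercomm_C_algebra_def by (elim conjE) assumption

lemma scF_comm: assumes "supercomm_C_algebra sc R0 R1" shows "\<forall>a\<in>R0. \<forall>b\<in>R0 \<union> R1. a * b = b * a"
  using assms unfolding supercomm_C_algebra_def by (elim conjE) assumption

lemma scF_anti: assumes "supercomm_C_algebra sc R0 R1" shows "\<forall>a\<in>R1. \<forall>b\<in>R1. a * b = - (b * a)"
  using assms unfolding supercomm_C_algebra_def by (elim conjE) assumption

lemma scF_int: assumes "supercomm_C_algebra sc R0 R1" shows "R0 \<inter> R1 = {0}"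
  using assms unfolding supercomm_C_algebra_def by (elim conjE) assumption

lemma scF_s0: assumes "supercomm_C_algebra sc R0 R1" shows "module.subspace sc R0"
  using assms unfolding supercomm_C_algebra_def by (elim conjE) assumption

lemma scF_s1: assumes "supercomm_C_algebra sc R0 R1" shows "module.subspace sc R1"
  using assms unfolding supercomm_C_algebra_def by (elim conjE) assumption

lemma sc_two: fixes sc :: "complex \<Rightarrow> 'a::ring_1 \<Rightarrow> 'a" and x :: 'a assumes "supercomm_C_algebra sc R0 R1" "x + x = 0" shows "x = 0"
proof -
  have m: "module sc" using assms(1) by (rule sc_module)
  have "sc 2 x = x + x" using module.scale_left_distrib[OF m, of 1 1 x] module.scale_one[OF m] by simp
  then have "sc 2 x = 0" using assms(2) by simp
  then have "sc (1/2) (sc 2 x) = 0" using m by (simp add: module.scale_zero_right)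
  moreover have "sc (1/2) (sc 2 x) = x" using m by (simp add: module.scale_scale module.scale_one)
  ultimately show ?thesis by simp
qed

lemma sc_odd_sq: assumes "supercomm_C_algebra sc R0 R1" "h \<in> R1" shows "h * h = 0"
proof -
  have "h * h = - (h * h)" using scF_anti[OF assms(1)] assms(2) by blast
  then have "h * h + h * h = 0" by (metis add.right_inverse)
  then show ?thesis using sc_two[OF assms(1)] by blast
qed

lemma sc_skc: assumes "supercomm_C_algebra sc R0 R1" "h \<in> R0 \<union> R1" shows "skc h"
  unfolding skc_def
proof
  fix x
  obtain a b where ab: "a \<in> R0" "b \<in> R1" "x = a + b" using scF_dec[OF assms(1)] by blast
  note cm = scF_comm[OF assms(1)] and an = scF_anti[OF assms(1)]
  show "\<exists>x'. x * h = h * x'"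
  proof (cases "h \<in> R0")
    case True
    have e1: "h * a = a * h" using cm True ab(1) by blast
    have e2: "h * b = b * h" using cm True ab(2) by blast
    have "x * h = h * x" unfolding ab(3) distrib_left distrib_right e1 e2 ..
    then show ?thesis by blast
  next
    case False
    then have h1: "h \<in> R1" using assms(2) by blast
    have e1: "a * h = h * a" using cm h1 ab(1) by blast
    have e2: "b * h = - (h * b)" using an h1 ab(2) by blast
    have "x * h = h * (a - b)" unfolding ab(3) distrib_left distrib_right e1 e2 right_diff_distrib
      by (simp only: diff_conv_add_uminus)
    then show ?thesis by blast
  qed
qed

lemma sc_even_nil:
  assumes sc: "supercomm_C_algebra sc R0 R1" and a: "a \<in> R0" and b: "b \<in> R1" and z: "(a + b) ^ k = 0"
  shows "a ^ Suc k = 0"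
proof -
  have m: "module sc" using sc by (rule sc_module)
  have s0: "module.subspace sc R0" and s1: "module.subspace sc R1"
    using scF_s0[OF sc] scF_s1[OF sc] by auto
  have P0: "a ^ Suc n \<in> R0" for n
  proof (induction n)
    case 0 then show ?case using a by simp
  next
    case (Suc n)
    have "\<forall>x\<in>R0. \<forall>y\<in>R0. x * y \<in> R0" using scF_00[OF sc] by blast
    then have "a * a ^ Suc n \<in> R0" using a Suc by blast
    then show ?case by (simp only: power_Suc[of a "Suc n"])
  qed
  have P1: "a ^ n * b \<in> R1" for n
  proof (induction n)
    case 0 then show ?case using b by simp
  next
    case (Suc n) then have "a * (a ^ n * b) \<in> R1" using a scF_01[OF sc] by blast
    then show ?case by (simp add: mult.assoc)
  qed
  have N1: "y \<in> R1 \<Longrightarrow> of_nat n * y \<in> R1" for y n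
  proof (induction n)
    case 0 then show ?case using module.subspace_0[OF m s1] by simp
  next
    case (Suc n)
    have "of_nat (Suc n) * y = y + of_nat n * y" by (simp add: distrib_right)
    then show ?case using Suc module.subspace_add[OF m s1] by simp
  qed
  have ba: "b * a = a * b" using a b scF_comm[OF sc] by auto
  have bb: "b * b = 0" using sc_odd_sq[OF sc b] .
  have bin: "(a + b) ^ Suc n = a ^ Suc n + of_nat (Suc n) * (a ^ n * b)" for n
  proof (induction n)
    case 0 then show ?case by simp
  next
    case (Suc n)
    have "(a + b) ^ Suc (Suc n) = (a ^ Suc n + of_nat (Suc n) * (a ^ n * b)) * (a + b)"
      using Suc by (simp only: power_Suc2[of "a+b" "Suc n"])
    also have "\<dots> = a ^ Suc n * a + of_nat (Suc n) * (a ^ n * (b * a)) + a ^ Suc n * b + of_nat (Suc n) * (a ^ n * (b * b))"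
      by (simp only: distrib_left distrib_right mult.assoc add.assoc)
    also have "\<dots> = a ^ Suc (Suc n) + of_nat (Suc n) * (a ^ Suc n * b) + a ^ Suc n * b"
    proof -
      have e1: "a ^ Suc n * a = a ^ Suc (Suc n)" by (rule power_Suc2[symmetric])
      have e2: "a ^ n * (a * b) = a ^ Suc n * b" by (simp only: power_Suc2 mult.assoc)
      show ?thesis unfolding ba bb by (simp only: e1 e2 mult_zero_right add_0_right)
    qed
    also have "\<dots> = a ^ Suc (Suc n) + of_nat (Suc (Suc n)) * (a ^ Suc n * b)"
    proof -
      have "of_nat (Suc (Suc n)) * (a ^ Suc n * b) = of_nat (Suc n) * (a ^ Suc n * b) + a ^ Suc n * b"
        by (simp only: of_nat_Suc[of "Suc n"] distrib_right mult_1_left add.commute)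
      then show ?thesis by (simp only: add.assoc)
    qed
    finally show ?case .
  qed
  have zz: "(a + b) ^ Suc k = 0" using z by (simp only: power_Suc mult_zero_right)
  have "a ^ Suc k + of_nat (Suc k) * (a ^ k * b) = 0" using bin[of k] zz by (simp only:)
  then have "a ^ Suc k = - (of_nat (Suc k) * (a ^ k * b))"
    by (simp only: eq_neg_iff_add_eq_0)
  also have "\<dots> \<in> R1" using N1[OF P1] module.subspace_neg[OF m s1] by blast
  finally have "a ^ Suc k \<in> R1" .
  moreover have "R0 \<inter> R1 = {0}" using scF_int[OF sc] .
  ultimately show ?thesis using P0[of k] by blast
qed


lemma gen_inv:
  fixes S :: "'a::ring_1 fls set"
  assumes dS: "\<And>g n. g \<in> S \<Longrightarrow> n < - int d \<Longrightarrow> fls_nth g n = 0"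
    and cS: "\<And>g n. g \<in> S \<Longrightarrow> n < 0 \<Longrightarrow> fls_nth g n \<in> QS H d (- n)"
  shows "f \<in> gen_subalg sc S \<Longrightarrow> \<forall>n<0. fls_nth f n \<in> QS H d (- n)"
proof (induction rule: gen_subalg.induct)
  case (gen f) then show ?case using cS by blast
next
  case one then show ?case by (simp add: QS.zero)
next
  case (add f g) then show ?case by (simp add: QS.add)
next
  case (scale f c)
  then show ?case by (simp add: fls_scaleC_def QS_lmult)
next
  case (mult f g)
  show ?case
  proof (intro allI impI)
    fix n :: int assume n: "n < 0"
    have "fls_nth (f * g) n = (\<Sum>i=fls_subdegree f..n - fls_subdegree g. fls_nth f i * fls_nth g (n - i))"
      by (rule fls_times_nth(2))
    also have "\<dots> \<in> QS H d (- n)"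
    proof (rule QS_sum)
      fix i assume "i \<in> {fls_subdegree f..n - fls_subdegree g}"
      show "fls_nth f i * fls_nth g (n - i) \<in> QS H d (- n)"
      proof (cases "i < 0")
        case True
        note fi = mult.IH(1)[rule_format, OF True]
        show ?thesis
        proof (cases "n - i < 0")
          case True
          have "fls_nth f i * fls_nth g (n - i) \<in> QS H d (- i + - (n - i))"
            using QS_mult fi mult.IH(2)[rule_format, OF True] by blast
          then show ?thesis by simp
        next
          case False
          have "fls_nth f i \<in> QS H d (- n)" using QS_mono[OF fi] False by simp
          then show ?thesis by (rule QS_rmult)
        qed
      next
        case False
        then have "n - i < 0" using n by simp
        note gi = mult.IH(2)[rule_format, OF this]
        have "fls_nth g (n - i) \<in> QS H d (- n)" using QS_mono[OF gi] False by simp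
        then show ?thesis by (rule QS_lmult)
      qed
    qed simp
    finally show "fls_nth (f * g) n \<in> QS H d (- n)" .
  qed
qed


theorem proposition4p1p5:
  fixes sc :: "complex \<Rightarrow> 'a::ring_1 \<Rightarrow> 'a"
    and R0 R1 :: "'a set"
    and S :: "'a fls set"
  assumes "supercomm_C_algebra sc R0 R1"
    and "finite S"
    and "gen_subalg sc S \<subseteq> sqrt_laurent"
  shows "\<exists>e\<in>E_seqs. gen_subalg sc S \<subseteq> laurent_eps e"
proof -
  note SC = assms(1)
  obtain p0 p1 where p: "\<And>x. p0 x \<in> R0" "\<And>x. p1 x \<in> R1" "\<And>x. x = p0 x + p1 x"
  proof -
    have "\<forall>x. \<exists>ab. fst ab \<in> R0 \<and> snd ab \<in> R1 \<and> x = fst ab + snd ab"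
      using scF_dec[OF SC] by fastforce
    then obtain F where "\<forall>x. fst (F x) \<in> R0 \<and> snd (F x) \<in> R1 \<and> x = fst (F x) + snd (F x)"
      by metis
    then show ?thesis using that[of "\<lambda>x. fst (F x)" "\<lambda>x. snd (F x)"] by blast
  qed
  define d :: nat where "d = 1 + (\<Sum>g\<in>S. nat (- fls_subdegree g))"
  have d0: "d > 0" unfolding d_def by simp
  have dS: "fls_nth g n = 0" if "g \<in> S" "n < - int d" for g n
  proof -
    have "nat (- fls_subdegree g) \<le> (\<Sum>g\<in>S. nat (- fls_subdegree g))"
      using member_le_sum[OF that(1), of "\<lambda>g. nat (- fls_subdegree g)"] assms(2) by simp
    then have "n < fls_subdegree g" using that(2) unfolding d_def by linarith
    then show ?thesis by simp
  qed
  define C where "C = (\<lambda>(g, n). fls_nth g n) ` (S \<times> {- int d..-1})"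
  have finC: "finite C" unfolding C_def using assms(2) by simp
  define H where "H = p0 ` C \<union> p1 ` C"
  have finH: "finite H" unfolding H_def using finC by simp
  have Hsk: "skc h" if "h \<in> H" for h
    using that p(1,2) sc_skc[OF SC] unfolding H_def by blast
  have Hnil: "\<exists>k. h ^ k = 0" if "h \<in> H" for h
  proof -
    from that consider x where "x \<in> C" "h = p0 x" | x where "x \<in> C" "h = p1 x"
      unfolding H_def by blast
    then show ?thesis
    proof cases
      case 1
      then obtain g n where gn: "g \<in> S" "n < 0" "x = fls_nth g n" unfolding C_def by force
      have "g \<in> gen_subalg sc S" using gn(1) by (rule gen_subalg.gen)
      then have "g \<in> sqrt_laurent" using assms(3) by blast
      then obtain k where "x ^ k = 0" using gn unfolding sqrt_laurent_def nilpotent_elt_def by blast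
      then have "(p0 x + p1 x) ^ k = 0" using p(3)[of x] by simp
      then have "p0 x ^ Suc k = 0" using sc_even_nil[OF SC p(1) p(2)] by blast
      then show ?thesis using 1 by blast
    next
      case 2
      have "h ^ 2 = 0" using sc_odd_sq[OF SC p(2)[of x]] 2 by (simp add: power2_eq_square)
      then show ?thesis by blast
    qed
  qed
  obtain fk where fk: "\<And>h. h \<in> H \<Longrightarrow> h ^ fk h = 0" using Hnil by metis
  define M where "M = (\<Sum>h\<in>H. fk h)"
  have HM: "h ^ M = 0" if "h \<in> H" for h
  proof -
    have "fk h \<le> M" unfolding M_def using member_le_sum[OF that, of fk] finH by simp
    then have "h ^ M = h ^ fk h * h ^ (M - fk h)" by (simp add: power_add[symmetric])
    then show ?thesis using fk[OF that] by simp
  qed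
  define K where "K = card H * M + 1"
  have van: "t = 0" if vh: "set hs \<subseteq> H" "K \<le> length hs" "t \<in> TL hs" for hs t
  proof -
    have "card H * M < length hs" using vh(2) unfolding K_def by simp
    then obtain h where "h \<in> H" "M \<le> count_list hs h" using pigeon[OF finH vh(1)] by blast
    then show ?thesis using TL_zero[OF Hsk HM _ vh(3)] by blast
  qed
  have cS: "fls_nth g n \<in> QS H d (- n)" if "g \<in> S" "n < 0" for g n
  proof (cases "n < - int d")
    case True then show ?thesis using dS[OF that(1)] QS.zero by simp
  next
    case False
    then have xC: "fls_nth g n \<in> C" unfolding C_def using that by force
    have one: "h \<in> QS H d (- n)" if "h \<in> H" for h
    proof (rule QS.base[of "[h]"])
      show "set [h] \<subseteq> H" using that by simp
      show "h \<in> TL [h]" by simp (metis mult_1_left mult_1_right)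
      show "- n \<le> int d * int (length [h])" using False by simp
    qed
    have "p0 (fls_nth g n) \<in> H" "p1 (fls_nth g n) \<in> H" using xC unfolding H_def by auto
    then have "p0 (fls_nth g n) + p1 (fls_nth g n) \<in> QS H d (- n)" using one QS.add by blast
    then show ?thesis using p(3) by metis
  qed
  have inv: "\<forall>n<0. fls_nth f n \<in> QS H d (- n)" if "f \<in> gen_subalg sc S" for f
    using gen_inv[of S d H, OF dS cS that] by blast
  have vv: "x = 0" if "x \<in> QS H d w" "int (d * K) \<le> w" for x w
    by (rule QS_vanish[OF d0 _ that]) (metis van)
  define B where "B = d * K"
  define e :: "int \<Rightarrow> nat" where "e = (\<lambda>n. if - int B \<le> n \<and> n < 0 then B else 0)"
  have "e \<in> E_seqs" unfolding E_seqs_def e_def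
    by (auto intro!: exI[of _ "- int B"])
  moreover have "gen_subalg sc S \<subseteq> laurent_eps e"
  proof
    fix f assume f: "f \<in> gen_subalg sc S"
    show "f \<in> laurent_eps e" unfolding laurent_eps_def
    proof (intro CollectI allI impI)
      fix n :: int assume n: "n < 0"
      have q: "fls_nth f n \<in> QS H d (- n)" using inv[OF f] n by blast
      show "fls_nth f n ^ (1 + e n) = 0"
      proof (cases "- int B \<le> n")
        case True
        have "fls_nth f n \<in> QS H d 1" using QS_mono[OF q] n by simp
        then have "fls_nth f n ^ B \<in> QS H d (int B)" by (rule QS_pow)
        then have "fls_nth f n ^ B = 0" using vv unfolding B_def by blast
        then show ?thesis using True n unfolding e_def by simp
      next
        case False
        then have "fls_nth f n = 0" using vv[OF q] unfolding B_def by simp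
        then show ?thesis by simp
      qed
    qed
  qed
  ultimately show ?thesis by blast
qed

end
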